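(* Let $f:\mathbb R\to\mathbb R$ be a Jones function and let $\varphi:\mathbb R\to\mathbb R$ be continuous and surjective. Then $\varphi\circ f$ is a Jones function.
   Context: A function $f:\mathbb R\to\mathbb R$ (identified with its graph in $\mathbb R^2$) is a Jones function if for every closed set $K\subset\mathbb R^2$ whose projection onto the $x$-axis, $\{x:\exists y,\ (x,y)\in K\}$, is uncountable, the graph of $f$ meets $K$. *)

theory Defs
  imports "HOL-Analysis.Analysis"
begin

definition jones_function :: "(real \<Rightarrow> real) \<Rightarrow> bool" where
  "jones_function f \<longleftrightarrow>
     (\<forall>K :: (real \<times> real) set. closed K \<and> uncountable (fst ` K)
        \<longrightarrow> (\<exists>x. (x, f x) \<in> K))"

end

theory Submission
  imports Defs
begin

theorem proposition4p1:
  fixes f \<phi> :: "real \<Rightarrow> real"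
  assumes "jones_function f"
    and "continuous_on UNIV \<phi>"
    and "surj \<phi>"
  shows "jones_function (\<phi> \<circ> f)"
  unfolding jones_function_def
proof (intro allI impI)
  fix K :: "(real \<times> real) set"
  assume K: "closed K \<and> uncountable (fst ` K)"
  define g where "g = (\<lambda>p::real\<times>real. (fst p, \<phi> (snd p)))"
  have cg: "continuous_on UNIV g"
    unfolding g_def
    by (intro continuous_intros continuous_on_compose2[OF assms(2)]) auto
  have cl: "closed (g -` K)"
    using closed_vimage[of K g] cg K by (simp add: continuous_on_eq_continuous_at)
  have "fst ` (g -` K) = fst ` K"
  proof
    show "fst ` (g -` K) \<subseteq> fst ` K"
      by (auto simp: g_def) (metis fst_conv image_eqI)
    show "fst ` K \<subseteq> fst ` (g -` K)"
    proof
      fix x assume "x \<in> fst ` K"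
      then obtain z where xz: "(x, z) \<in> K" by force
      obtain y where "\<phi> y = z" using assms(3) by (metis surjD)
      then have "(x, y) \<in> g -` K" using xz by (simp add: g_def)
      then show "x \<in> fst ` (g -` K)" by force
    qed
  qed
  then obtain x where "(x, f x) \<in> g -` K"
    using assms(1) cl K unfolding jones_function_def by metis
  then show "\<exists>x. (x, (\<phi> \<circ> f) x) \<in> K" by (auto simp: g_def)
qed

end
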